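(* For $K\ge 1$ define $\mathcal{R}:\mathbb{R}^K\times[0,1]\to\mathbb{R}$ by \[ \mathcal{R}(a_{1},\dots,a_{K},x)=\sum_{k=1}^{K}a_{k}\sin(2\pi kx). \] For fixed $A>0$, $K\ge1$ and any $0<\epsilon<1$, there exists an MLP network $\tilde{\mathcal{R}}:\mathbb{R}^{K+1}\to\mathbb{R}$, consisting of dense layers and $\tanh$ as activation function, with $O(K^{2}+K\log^{2}(K\epsilon^{-1}))$ weights, for which \[ |\tilde{\mathcal{R}}(a_{1},\dots,a_{K},x)-\mathcal{R}(a_{1},\dots,a_{K},x)|\leq\epsilon \] for all $a_{1},\dots,a_{K}\in[-A,A]$ and $x\in[0,1]$.
   Context: An MLP (multilayer perceptron) network is a feed-forward composition of layers, each of the form $v_j=\sigma\circ(M_j v_{j-1}+b_j)$ with a matrix $M_j$ and bias vector $b_j$ and coordinate-wise nonlinearity $\sigma$ (here $\sigma=\tanh$); in some layers the bias and/or the nonlinearity may be omitted. The "number of weights" is the total number of parameters (entries of all $M_j$ and $b_j$). *)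

theory Defs
  imports Complex_Main
begin

text \<open>A dense layer: weight matrix (list of rows), optional bias vector,
  and a flag saying whether the coordinate-wise tanh nonlinearity is applied.\<close>
datatype layer = Layer "real list list" "real list option" bool

fun eval_layer :: "layer \<Rightarrow> real list \<Rightarrow> real list" where
  "eval_layer (Layer M bo act) v =
     (let z = map (\<lambda>r. sum_list (map2 (*) r v)) M;
          z' = (case bo of None \<Rightarrow> z | Some b \<Rightarrow> map2 (+) z b)
      in if act then map tanh z' else z')"

fun wf_layer :: "nat \<Rightarrow> layer \<Rightarrow> bool" where
  "wf_layer n (Layer M bo act) =
     ((\<forall>r\<in>set M. length r = n) \<and>
      (case bo of None \<Rightarrow> True | Some b \<Rightarrow> length b = length M))"

fun out_dim :: "layer \<Rightarrow> nat" where
  "out_dim (Layer M bo act) = length M"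

fun layer_weights :: "layer \<Rightarrow> nat" where
  "layer_weights (Layer M bo act) =
     sum_list (map length M) + (case bo of None \<Rightarrow> 0 | Some b \<Rightarrow> length b)"

type_synonym mlp = "layer list"

fun wf_mlp :: "nat \<Rightarrow> mlp \<Rightarrow> nat \<Rightarrow> bool" where
  "wf_mlp n [] m = (n = m)"
| "wf_mlp n (L # Ls) m = (wf_layer n L \<and> wf_mlp (out_dim L) Ls m)"

definition eval_mlp :: "mlp \<Rightarrow> real list \<Rightarrow> real list" where
  "eval_mlp N v = fold eval_layer N v"

definition num_weights :: "mlp \<Rightarrow> nat" where
  "num_weights N = sum_list (map layer_weights N)"

definition R_fun :: "real list \<Rightarrow> real \<Rightarrow> real" where
  "R_fun a x = (\<Sum>k=1..length a. a ! (k - 1) * sin (2 * pi * real k * x))"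

end

theory Submission
  imports Defs
begin


definition mkL :: "nat \<Rightarrow> nat \<Rightarrow> (nat \<Rightarrow> nat \<Rightarrow> real) \<Rightarrow> (nat \<Rightarrow> real) \<Rightarrow> bool \<Rightarrow> layer" where
  "mkL n m W b act = Layer (map (\<lambda>i. map (W i) [0..<n]) [0..<m]) (Some (map b [0..<m])) act"

lemma wf_mkL: "wf_layer n (mkL n m W b act)"
  by (auto simp: mkL_def)

lemma out_dim_mkL: "out_dim (mkL n m W b act) = m"
  by (simp add: mkL_def)

lemma weights_mkL: "layer_weights (mkL n m W b act) = m * n + m"
  by (simp add: mkL_def comp_def sum_list_triv)

lemma sum_row: "length v = n \<Longrightarrow> sum_list (map2 (*) (map f [0..<n]) v) = (\<Sum>j<n. f j * v ! j)"
proof -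
  assume "length v = n"
  then have v: "v = map (\<lambda>j. v ! j) [0..<n]" by (metis map_nth)
  have "map2 (*) (map f [0..<n]) v = map (\<lambda>j. f j * v ! j) [0..<n]"
    by (subst v) (simp add: zip_map_map zip_same_conv_map comp_def)
  then show ?thesis by (simp add: sum_list_map_eq_sum_count2 atLeast0LessThan[symmetric] sum_set_upt_conv_sum_list_nat[symmetric])
qed

lemma eval_mkL: "length v = n \<Longrightarrow> eval_layer (mkL n m W b act) v =
   map (\<lambda>i. (if act then tanh else id) ((\<Sum>j<n. W i j * v ! j) + b i)) [0..<m]"
  by (simp add: mkL_def sum_row zip_map_map Let_def zip_same_conv_map comp_def)



definition ex :: "real \<Rightarrow> real \<Rightarrow> real" where "ex M u = exp (2*M) * (1 + u) / 2"

lemma ex_tanh_err: "\<bar>ex M (tanh (z - M)) - exp (2*z)\<bar> \<le> exp (4*z - 2*M)"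
proof -
  define p where "p = exp (2*z)"
  define q where "q = exp (2*M)"
  have p: "p > 0" and q: "q > 0" by (auto simp: p_def q_def)
  have e: "exp (- 2 * (z - M)) = q / p"
    by (simp add: p_def q_def exp_diff[symmetric] algebra_simps)
  have t: "tanh (z - M) = (1 - q/p) / (1 + q/p)" unfolding tanh_real_altdef e ..
  have pq: "p \<noteq> 0" "p + q \<noteq> 0" using p q by auto
  have "1 + q/p = (p+q)/p" "1 - q/p = (p-q)/p" using pq by (simp_all add: field_simps)
  then have "(1 - q/p) / (1 + q/p) = (p - q) / (p + q)" using pq by simp
  moreover have "1 + (p - q) / (p + q) = 2 * p / (p + q)" using pq by (simp add: field_simps)
  ultimately have "1 + (1 - q/p) / (1 + q/p) = 2 * p / (p + q)" by simp
  then have h: "1 + tanh (z - M) = 2 * p / (p + q)" unfolding t .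
  have "ex M (tanh (z - M)) = q * (2 * p / (p + q)) / 2"
    unfolding ex_def h q_def ..
  also have "\<dots> = q * p / (p + q)" by (simp add: divide_simps)
  finally have "ex M (tanh (z - M)) = q * p / (p + q)" .
  moreover have "p + q \<noteq> 0" using p q by simp
  ultimately have "exp (2*z) - ex M (tanh (z - M)) = p - q * p / (p + q)"
    by (simp add: p_def)
  also have "\<dots> = p^2 / (p + q)" using \<open>p + q \<noteq> 0\<close> by (simp add: divide_simps power2_eq_square algebra_simps)
  finally have "exp (2*z) - ex M (tanh (z - M)) = p^2 / (p + q)" .
  moreover have "p^2 / (p + q) \<le> p^2 / q"
    using p q by (intro divide_left_mono) auto
  moreover have "p^2 / q = exp (4*z - 2*M)"
    by (simp add: p_def q_def power2_eq_square exp_diff exp_add[symmetric])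
  moreover have "p^2 / (p+q) \<ge> 0" using p q by simp
  ultimately show ?thesis by (simp add: abs_if)
qed

lemma ex_gadget:
  fixes Z \<delta> :: real
  assumes "\<delta> > 0"
  shows "\<exists>M. \<forall>z. z \<le> Z \<longrightarrow> \<bar>ex M (tanh (z - M)) - exp (2*z)\<bar> \<le> \<delta>"
proof (intro exI allI impI)
  fix z assume "z \<le> Z"
  define M where "M = (4*Z - ln \<delta>)/2"
  have "\<bar>ex M (tanh (z - M)) - exp (2*z)\<bar> \<le> exp (4*z - 2*M)" by (rule ex_tanh_err)
  also have "\<dots> \<le> exp (4*Z - 2*M)" using \<open>z \<le> Z\<close> by simp
  also have "4*Z - 2*M = ln \<delta>" unfolding M_def by (simp add: field_simps)
  then have "exp (4*Z - 2*M) = \<delta>" using assms by simp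
  finally show "\<bar>ex M (tanh (z - M)) - exp (2*z)\<bar> \<le> \<delta>" by simp
qed

lemma exp_taylor1: fixes t :: real assumes "\<bar>t\<bar> \<le> 1" shows "\<bar>exp t - 1 - t\<bar> \<le> t^2"
proof (cases "t \<ge> 0")
  case True
  have "exp t \<ge> 1 + t" by (rule exp_ge_add_one_self)
  then have "exp t - 1 - t \<ge> 0" by linarith
  then show ?thesis using exp_bound[of t] assms True by (simp add: abs_of_nonneg)
next
  case False
  have a: "exp (-t) \<ge> 1 - t" using exp_ge_add_one_self[of "-t"] by simp
  have "exp t = 1 / exp (-t)" by (simp add: exp_minus field_simps)
  also have "\<dots> \<le> 1 / (1 - t)" using a False by (intro divide_left_mono) auto
  finally have "exp t \<le> 1 / (1 - t)" .
  moreover have "1 / (1 - t) - 1 - t = t^2 / (1 - t)" using False by (simp add: field_simps power2_eq_square)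
  moreover have "t^2 / (1 - t) \<le> t^2" using False by (simp add: divide_le_eq power2_eq_square mult_le_cancel_left1)
  moreover have "exp t - 1 - t \<ge> 0" using exp_ge_add_one_self[of t] by linarith
  ultimately show ?thesis by (simp add: abs_of_nonneg)
qed

lemma lin_gadget:
  fixes B \<delta> :: real
  assumes "B \<ge> 0" "\<delta> > 0"
  shows "\<exists>g>0. g \<le> 1 \<and> (\<forall>u. \<bar>u\<bar> \<le> B \<longrightarrow> \<bar>(exp (g*u) - 1)/g - u\<bar> \<le> \<delta>)"
proof -
  define g where "g = min 1 (min (1/(B+1)) (\<delta>/(B+1)^2))"
  have "B + 1 > 0" using assms by simp
  then have g0: "g > 0" using assms by (auto simp: g_def)
  have g1: "g \<le> 1/(B+1)" "g \<le> \<delta>/(B+1)^2" "g \<le> 1" by (auto simp: g_def)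
  have "\<bar>(exp (g*u) - 1)/g - u\<bar> \<le> \<delta>" if u: "\<bar>u\<bar> \<le> B" for u
  proof -
    have "\<bar>g*u\<bar> \<le> g * (B+1)" using u g0 by (simp add: abs_mult mult_left_mono)
    also have "\<dots> \<le> 1" using g1(1) assms(1) by (simp add: field_simps)
    finally have t: "\<bar>exp (g*u) - 1 - g*u\<bar> \<le> (g*u)^2" by (rule exp_taylor1)
    have "(exp (g*u) - 1)/g - u = (exp (g*u) - 1 - g*u)/g" using g0 by (simp add: field_simps)
    then have "\<bar>(exp (g*u) - 1)/g - u\<bar> = \<bar>exp (g*u) - 1 - g*u\<bar>/g" using g0 by simp
    also have "\<dots> \<le> (g*u)^2 / g" using t g0 by (simp add: divide_right_mono)
    also have "\<dots> = g * u^2" using g0 by (simp add: power2_eq_square)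
    also have "\<dots> \<le> g * (B+1)^2"
    proof -
      have "\<bar>u\<bar>^2 \<le> (B+1)^2" using u by (intro power_mono) auto
      then show ?thesis using g0 by (intro mult_left_mono) auto
    qed
    also have "\<dots> \<le> \<delta>" using g1(2) assms(1) by (simp add: field_simps)
    finally show ?thesis .
  qed
  then show ?thesis using g0 g1 by blast
qed

definition F :: "real \<Rightarrow> real \<Rightarrow> real \<Rightarrow> real" where
  "F g M w = ex M (tanh (g*w/2 - M))"

definition G :: "real \<Rightarrow> real \<Rightarrow> real \<Rightarrow> real \<Rightarrow> real" where
  "G g M a b = (F g M (a+b) - F g M a - F g M b + 1) / g^2"

lemma F_err:
  assumes "g*w/2 \<le> Z" "\<forall>z. z \<le> Z \<longrightarrow> \<bar>ex M (tanh (z - M)) - exp (2*z)\<bar> \<le> d"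
  shows "\<bar>F g M w - exp (g*w)\<bar> \<le> d"
  using assms(2)[rule_format, OF assms(1)] by (simp add: F_def)

lemma prod_gadget:
  fixes B \<delta> :: real
  assumes B: "B \<ge> 0" and d: "\<delta> > 0"
  shows "\<exists>g M. g > 0 \<and> (\<forall>a b. \<bar>a\<bar> \<le> B \<longrightarrow> \<bar>b\<bar> \<le> B \<longrightarrow> \<bar>G g M a b - a*b\<bar> \<le> \<delta>)"
proof -
  define d2 where "d2 = min 1 (\<delta>/(2*(2*B+1)))"
  have Bp: "2*B+1 > 0" using B by simp
  have d2a: "d2 > 0" "d2 \<le> 1" using B d by (auto simp: d2_def)
  have "d2 \<le> \<delta>/(2*(2*B+1))" by (simp add: d2_def)
  then have "d2 * (2*B+1) \<le> \<delta>/(2*(2*B+1)) * (2*B+1)" using Bp by (intro mult_right_mono) auto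
  also have "\<dots> = \<delta>/2" using Bp by (simp add: field_simps)
  finally have d2: "d2 > 0" "d2 \<le> 1" "d2 * (2*B+1) \<le> \<delta>/2" using d2a by auto
  obtain g where g: "g > 0" "g \<le> 1" and gl: "\<And>u. \<bar>u\<bar> \<le> B \<Longrightarrow> \<bar>(exp (g*u) - 1)/g - u\<bar> \<le> d2"
    using lin_gadget[OF B d2(1)] by blast
  have d3: "g^2*\<delta>/6 > 0" using g d by simp
  obtain M where M: "\<forall>z. z \<le> g*B \<longrightarrow> \<bar>ex M (tanh (z - M)) - exp (2*z)\<bar> \<le> g^2*\<delta>/6"
    using ex_gadget[OF d3] by blast
  have "\<bar>G g M a b - a*b\<bar> \<le> \<delta>" if a: "\<bar>a\<bar> \<le> B" and b: "\<bar>b\<bar> \<le> B" for a b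
  proof -
    define pa where "pa = (exp (g*a) - 1)/g"
    define pb where "pb = (exp (g*b) - 1)/g"
    have ea: "\<bar>pa - a\<bar> \<le> d2" using gl[OF a] by (simp add: pa_def)
    have eb: "\<bar>pb - b\<bar> \<le> d2" using gl[OF b] by (simp add: pb_def)
    have pbb: "\<bar>pb\<bar> \<le> B + 1" using eb d2 b by linarith
    have "(a+b)/2 \<le> B" using a b by (auto simp: abs_le_iff)
    then have "g*((a+b)/2) \<le> g*B" using g by (intro mult_left_mono) auto
    then have "g*(a+b)/2 \<le> g*B" by simp
    then have e1: "\<bar>F g M (a+b) - exp (g*(a+b))\<bar> \<le> g^2*\<delta>/6" by (rule F_err[OF _ M])
    have "a/2 \<le> B" using a b B by (auto simp: abs_le_iff)
    then have "g*(a/2) \<le> g*B" using g by (intro mult_left_mono) auto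
    then have "g*a/2 \<le> g*B" by simp
    then have e2: "\<bar>F g M a - exp (g*a)\<bar> \<le> g^2*\<delta>/6" by (rule F_err[OF _ M])
    have "b/2 \<le> B" using a b B by (auto simp: abs_le_iff)
    then have "g*(b/2) \<le> g*B" using g by (intro mult_left_mono) auto
    then have "g*b/2 \<le> g*B" by simp
    then have e3: "\<bar>F g M b - exp (g*b)\<bar> \<le> g^2*\<delta>/6" by (rule F_err[OF _ M])
    have pp: "pa * pb = (exp (g*(a+b)) - exp (g*a) - exp (g*b) + 1) / g^2"
      using g by (simp add: pa_def pb_def distrib_left exp_add power2_eq_square field_simps)
    have "G g M a b - pa * pb = ((F g M (a+b) - exp (g*(a+b))) - (F g M a - exp (g*a)) - (F g M b - exp (g*b))) / g^2"
      unfolding G_def pp using g by (simp add: field_simps)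
    also have "\<bar>\<dots>\<bar> = \<bar>(F g M (a+b) - exp (g*(a+b))) - (F g M a - exp (g*a)) - (F g M b - exp (g*b))\<bar> / g^2"
      by (simp add: abs_divide)
    also have "\<dots> \<le> (3 * (g^2*\<delta>/6)) / g^2"
      using e1 e2 e3 g by (intro divide_right_mono) (linarith, simp)
    also have "\<dots> = \<delta>/2" using g by (simp add: field_simps)
    finally have t1: "\<bar>G g M a b - pa * pb\<bar> \<le> \<delta>/2" .
    have "pa * pb - a * b = (pa - a) * pb + a * (pb - b)" by (simp add: algebra_simps)
    then have "\<bar>pa * pb - a * b\<bar> \<le> \<bar>pa - a\<bar> * \<bar>pb\<bar> + \<bar>a\<bar> * \<bar>pb - b\<bar>"
      by (simp add: abs_mult[symmetric] abs_triangle_ineq)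
    also have "\<dots> \<le> d2 * (B+1) + B * d2"
      using ea eb pbb a by (intro add_mono mult_mono) auto
    also have "\<dots> = d2 * (2*B+1)" by (simp add: algebra_simps)
    finally have t2: "\<bar>pa * pb - a * b\<bar> \<le> \<delta>/2" using d2 by linarith
    show ?thesis using t1 t2 by linarith
  qed
  then show ?thesis using g by blast
qed



lemma pow_fact_le_exp: "(T::real) \<ge> 0 \<Longrightarrow> T^m / fact m \<le> exp T"
proof -
  assume T: "T \<ge> 0"
  have s: "summable (\<lambda>n. T^n / fact n)" using summable_exp[of T] by (simp add: divide_inverse mult.commute)
  have "sum (\<lambda>n. T^n / fact n) {m} \<le> suminf (\<lambda>n. T^n / fact n)"
    by (rule sum_le_suminf[OF s]) (use T in auto)
  also have "suminf (\<lambda>n. T^n / fact n) = exp T" by (simp add: exp_def divide_inverse mult.commute)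
  finally show ?thesis by simp
qed

lemma fact_ratio:
  fixes T :: real
  assumes T: "T \<ge> 0" and m: "2*T \<le> real m" and mn: "m \<le> n"
  shows "T^n / fact n \<le> exp T / 2^(n-m)"
  using mn
proof (induction n rule: dec_induct)
  case base
  then show ?case using pow_fact_le_exp[OF T] by simp
next
  case (step k)
  have k: "2*T \<le> real (Suc k)" using m step.hyps(1) by linarith
  have "T^(Suc k) / fact (Suc k) = (T^k / fact k) * (T / real (Suc k))"
    by (simp add: field_simps)
  also have "\<dots> \<le> (exp T / 2^(k-m)) * (1/2)"
  proof (intro mult_mono step.IH)
    show "T / real (Suc k) \<le> 1/2" using k by (simp add: field_simps)
  qed (use T in auto)
  also have "\<dots> = exp T / 2^(Suc k - m)" using step.hyps(1)
    by (simp add: Suc_diff_le field_simps)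
  finally show ?case .
qed

lemma degree_choice:
  fixes T \<eta> :: real
  assumes T: "T \<ge> 0" and eta: "\<eta> > 0"
  defines "n \<equiv> nat \<lceil>2*T\<rceil> + nat \<lceil>2*T + 2 * ln (1/\<eta>)\<rceil>"
  shows "T^n / fact n \<le> \<eta>"
proof -
  define m where "m = nat \<lceil>2*T\<rceil>"
  define r where "r = nat \<lceil>2*T + 2 * ln (1/\<eta>)\<rceil>"
  have nm: "n = m + r" by (simp add: n_def m_def r_def)
  have m: "2*T \<le> real m" unfolding m_def by linarith
  have r: "2*T + 2 * ln (1/\<eta>) \<le> real r" unfolding r_def by linarith
  have "T^n / fact n \<le> exp T / 2^(n-m)" by (rule fact_ratio[OF T m]) (simp add: nm)
  also have "n - m = r" by (simp add: nm)
  also have "exp T / 2^r \<le> \<eta>"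
  proof -
    have "exp (real r / 2) = exp (1/2) ^ r" by (simp add: exp_of_nat_mult[symmetric] field_simps)
    also have "\<dots> \<le> 2^r" by (intro power_mono exp_half_le2) auto
    finally have e1: "exp (real r / 2) \<le> 2^r" .
    have "exp T / \<eta> = exp (T + ln (1/\<eta>))" using eta by (simp add: exp_add)
    also have "\<dots> \<le> exp (real r / 2)" using r by simp
    finally have "exp T / \<eta> \<le> 2^r" using e1 by linarith
    then show ?thesis using eta by (simp add: field_simps)
  qed
  finally show ?thesis .
qed

lemma sin_lip: "\<bar>sin (a::real) - sin b\<bar> \<le> \<bar>a - b\<bar>"
proof -
  have "\<bar>sin a - sin b\<bar> = 2 * \<bar>sin ((a - b)/2)\<bar> * \<bar>cos ((a + b)/2)\<bar>"
    by (simp add: sin_diff_sin abs_mult)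
  also have "\<dots> \<le> 2 * \<bar>(a - b)/2\<bar> * 1"
    by (intro mult_mono abs_sin_x_le_abs_x) auto
  finally show ?thesis by simp
qed

definition cf :: "real \<Rightarrow> real \<Rightarrow> nat \<Rightarrow> nat \<Rightarrow> real" where
  "cf tau h n i = (\<Sum>m<n. sin_coeff m * tau^m / h^m * of_nat (m choose i) * (-1)^(m-i))"

lemma poly_exp_id:
  "(\<Sum>i\<le>n. cf tau h n i * y^i) = (\<Sum>m<n. sin_coeff m * (tau*((y-1)/h))^m)"
proof -
  have "(\<Sum>i\<le>n. cf tau h n i * y^i) = (\<Sum>m<n. \<Sum>i\<le>n. sin_coeff m * tau^m / h^m * (of_nat (m choose i) * y^i * (-1)^(m-i)))"
    unfolding cf_def sum_distrib_right by (subst sum.swap) (simp add: ac_simps)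
  also have "\<dots> = (\<Sum>m<n. sin_coeff m * tau^m / h^m * (\<Sum>i\<le>m. of_nat (m choose i) * y^i * (-1)^(m-i)))"
  proof (intro sum.cong refl)
    fix m assume "m \<in> {..<n}"
    then have mn: "m \<le> n" by simp
    have "(\<Sum>i\<le>n. of_nat (m choose i) * y^i * (-1::real)^(m-i)) = (\<Sum>i\<le>m. of_nat (m choose i) * y^i * (-1)^(m-i))"
      by (rule sum.mono_neutral_right) (use mn in auto)
    then show "(\<Sum>i\<le>n. sin_coeff m * tau^m / h^m * (of_nat (m choose i) * y^i * (-1)^(m-i))) =
          sin_coeff m * tau^m / h^m * (\<Sum>i\<le>m. of_nat (m choose i) * y^i * (-1)^(m-i))"
      by (simp only: sum_distrib_left[symmetric])
  qed
  also have "\<dots> = (\<Sum>m<n. sin_coeff m * tau^m / h^m * (y - 1)^m)"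
    using binomial_ring[of y "-1"] by simp
  also have "\<dots> = (\<Sum>m<n. sin_coeff m * (tau*((y-1)/h))^m)"
    by (simp add: power_mult_distrib power_divide mult.assoc)
  finally show ?thesis .
qed



lemma sum_split_add: "(\<Sum>j<K+m. f j) = (\<Sum>j<K. f j) + (\<Sum>t<m. f (K+t))" for K m :: nat and f :: "nat \<Rightarrow> real"
  by (induction m) (simp_all add: ac_simps)

lemma sum_delta_mult: "(\<Sum>j<N. (if j = i then c else 0) * f j) = (if i < N then c * f i else (0::real))" for N i :: nat
proof -
  have eq: "(\<lambda>j. (if j = i then c else 0) * f j) = (\<lambda>j. if j = i then c * f i else 0)" by auto
  show ?thesis unfolding eq using sum.delta[of "{..<N}" i "\<lambda>_. c * f i"] by simp
qed

definition W1 :: "nat \<Rightarrow> real \<Rightarrow> real \<Rightarrow> nat \<Rightarrow> nat \<Rightarrow> real" where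
  "W1 K g1 h i j = (if i < K then (if j = i then g1/2 else 0) else (if j = K then real (i - K + 1) * h/2 else 0))"

definition W2 :: "nat \<Rightarrow> real \<Rightarrow> real \<Rightarrow> (nat \<Rightarrow> nat \<Rightarrow> real) \<Rightarrow> nat \<Rightarrow> nat \<Rightarrow> real" where
  "W2 K g1 M1 c i j = (if i < K then (if j = i then exp (2*M1)/(2*g1) else 0)
      else (if K \<le> j then c (i-K) (j-K+1) * exp (2*M1)/2 else 0))"

definition b2 :: "nat \<Rightarrow> nat \<Rightarrow> real \<Rightarrow> real \<Rightarrow> (nat \<Rightarrow> nat \<Rightarrow> real) \<Rightarrow> nat \<Rightarrow> real" where
  "b2 K n g1 M1 c i = (if i < K then (exp (2*M1)/2 - 1)/g1
      else c (i-K) 0 + (\<Sum>t<n. c (i-K) (Suc t) * exp (2*M1)/2))"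

definition W3 :: "nat \<Rightarrow> real \<Rightarrow> nat \<Rightarrow> nat \<Rightarrow> real" where
  "W3 K g2 i j = (if i < K then (if j = i then g2/2 else 0) + (if j = K + i then g2/2 else 0)
      else (if j = i - K then g2/2 else 0))"

definition W4 :: "nat \<Rightarrow> real \<Rightarrow> real \<Rightarrow> nat \<Rightarrow> nat \<Rightarrow> real" where
  "W4 K g2 M2 i j = (if j < K then 1 else -1) * exp (2*M2)/(2*g2^2)"

definition net :: "nat \<Rightarrow> nat \<Rightarrow> real \<Rightarrow> real \<Rightarrow> real \<Rightarrow> real \<Rightarrow> real \<Rightarrow> (nat \<Rightarrow> nat \<Rightarrow> real) \<Rightarrow> mlp" where
  "net K n g1 h M1 g2 M2 c =
    [mkL (K+1) (K+n) (W1 K g1 h) (\<lambda>i. - M1) True,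
     mkL (K+n) (2*K) (W2 K g1 M1 c) (b2 K n g1 M1 c) False,
     mkL (2*K) (3*K) (W3 K g2) (\<lambda>i. - M2) True,
     mkL (3*K) 1 (W4 K g2 M2) (\<lambda>i. real K * (1 - exp (2*M2)/2)/g2^2) False]"

definition alpha :: "real \<Rightarrow> real \<Rightarrow> real \<Rightarrow> real" where
  "alpha g1 M1 a = (ex M1 (tanh (g1/2 * a - M1)) - 1)/g1"

definition beta :: "nat \<Rightarrow> real \<Rightarrow> real \<Rightarrow> (nat \<Rightarrow> nat \<Rightarrow> real) \<Rightarrow> real \<Rightarrow> nat \<Rightarrow> real" where
  "beta n h M1 c x k = c k 0 + (\<Sum>t<n. c k (Suc t) * ex M1 (tanh (real (Suc t) * h/2 * x - M1)))"

lemma net_wf: "wf_mlp (K+1) (net K n g1 h M1 g2 M2 c) 1"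
  by (simp add: net_def wf_mkL out_dim_mkL)

lemma net_weights: "num_weights (net K n g1 h M1 g2 M2 c) =
   (K+n)*(K+1) + (K+n) + 2*K*(K+n) + 2*K + 3*K*(2*K) + 3*K + 3*K + 1"
  by (simp add: net_def num_weights_def weights_mkL)

lemma layer1:
  assumes "length a = K"
  shows "eval_layer (mkL (K+1) (K+n) (W1 K g1 h) (\<lambda>i. - M1) True) (a @ [x]) =
    map (\<lambda>i. if i < K then tanh (g1/2 * a!i - M1) else tanh (real (i - K + 1) * h/2 * x - M1)) [0..<K+n]"
proof -
  have "(\<Sum>j<K+1. W1 K g1 h i j * (a @ [x]) ! j) =
     (if i < K then g1/2 * a!i else real (i - K + 1) * h/2 * x)" for i
  proof (cases "i < K")
    case True
    then show ?thesis using assms by (simp add: W1_def sum_delta_mult nth_append)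
  next
    case False
    then show ?thesis using assms by (simp add: W1_def sum_delta_mult nth_append)
  qed
  then show ?thesis using assms by (simp add: eval_mkL)
qed

lemma layer2:
  fixes K n :: nat and a :: "real list" and x h g1 M1 :: real and c :: "nat \<Rightarrow> nat \<Rightarrow> real"
  assumes g1: "g1 > 0"
  defines "u \<equiv> (\<lambda>i. if i < K then tanh (g1/2 * a!i - M1) else tanh (real (i - K + 1) * h/2 * x - M1))"
  shows "eval_layer (mkL (K+n) (2*K) (W2 K g1 M1 c) (b2 K n g1 M1 c) False) (map u [0..<K+n]) =
    map (\<lambda>i. if i < K then alpha g1 M1 (a!i) else beta n h M1 c x (i-K)) [0..<2*K]"
proof -
  let ?U = "map u [0..<K+n]"
  have "(\<Sum>j<K+n. W2 K g1 M1 c i j * ?U ! j) + b2 K n g1 M1 c i =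
     (if i < K then alpha g1 M1 (a!i) else beta n h M1 c x (i-K))" for i
  proof (cases "i < K")
    case True
    have "(\<Sum>j<K+n. W2 K g1 M1 c i j * ?U ! j) = exp (2*M1)/(2*g1) * u i"
      using True by (simp add: W2_def sum_delta_mult)
    then show ?thesis using True g1
      by (simp add: b2_def alpha_def ex_def u_def field_simps)
  next
    case False
    define k where "k = i - K"
    have "(\<Sum>j<K+n. W2 K g1 M1 c i j * ?U ! j) = (\<Sum>t<n. c k (Suc t) * exp (2*M1)/2 * u (K+t))"
      unfolding sum_split_add using False by (simp add: W2_def k_def)
    also have "\<dots> = (\<Sum>t<n. c k (Suc t) * exp (2*M1)/2 * tanh (real (Suc t) * h/2 * x - M1))"
      by (simp add: u_def)
    finally have s: "(\<Sum>j<K+n. W2 K g1 M1 c i j * ?U ! j) = \<dots>" .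
    have "(\<Sum>t<n. c k (Suc t) * exp (2*M1)/2 * tanh (real (Suc t) * h/2 * x - M1)) + (\<Sum>t<n. c k (Suc t) * exp (2*M1)/2)
       = (\<Sum>t<n. c k (Suc t) * ex M1 (tanh (real (Suc t) * h/2 * x - M1)))"
      unfolding sum.distrib[symmetric] by (intro sum.cong refl) (simp add: ex_def field_simps)
    then show ?thesis using False s
      by (simp add: b2_def beta_def k_def)
  qed
  then show ?thesis by (simp add: eval_mkL)
qed

lemma layer3:
  fixes K :: nat and p q :: "nat \<Rightarrow> real" and g2 M2 :: real
  shows "eval_layer (mkL (2*K) (3*K) (W3 K g2) (\<lambda>i. - M2) True) (map (\<lambda>i. if i < K then p i else q (i-K)) [0..<2*K]) =
    map (\<lambda>i. if i < K then tanh (g2*(p i + q i)/2 - M2) else if i < 2*K then tanh (g2 * p (i-K)/2 - M2)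
       else tanh (g2 * q (i-2*K)/2 - M2)) [0..<3*K]"
proof -
  let ?V = "map (\<lambda>i. if i < K then p i else q (i-K)) [0..<2*K]"
  have "(\<Sum>j<2*K. W3 K g2 i j * ?V ! j) + - M2 =
     (if i < K then g2*(p i + q i)/2 - M2 else if i < 2*K then g2 * p (i-K)/2 - M2
       else g2 * q (i-2*K)/2 - M2)" if i: "i < 3*K" for i
  proof (cases "i < K")
    case True
    have "(\<Sum>j<2*K. W3 K g2 i j * ?V ! j) = (\<Sum>j<2*K. (if j = i then g2/2 else 0) * ?V ! j) + (\<Sum>j<2*K. (if j = K+i then g2/2 else 0) * ?V ! j)"
      unfolding sum.distrib[symmetric] using True by (intro sum.cong refl) (simp add: W3_def distrib_right)
    also have "\<dots> = g2/2 * p i + g2/2 * q i" using True by (simp only: sum_delta_mult) simp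
    finally show ?thesis using True by (simp add: field_simps)
  next
    case False
    have iK: "i - K < 2*K" using i by simp
    have "(\<Sum>j<2*K. W3 K g2 i j * ?V ! j) = (\<Sum>j<2*K. (if j = i - K then g2/2 else 0) * ?V ! j)"
      using False by (simp add: W3_def)
    also have "\<dots> = g2/2 * ?V ! (i - K)" using iK by (simp only: sum_delta_mult) simp
    also have "?V ! (i - K) = (if i - K < K then p (i-K) else q (i-K-K))" using iK by simp
    finally have S: "(\<Sum>j<2*K. W3 K g2 i j * ?V ! j) = g2/2 * (if i - K < K then p (i-K) else q (i-K-K))" .
    have e: "i - K - K = i - 2*K" by simp
    have e2: "i < 2*K \<longleftrightarrow> i - K < K" using False by arith
    show ?thesis unfolding S e using False i e2 by (cases "i < 2*K") simp_all
  qed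
  then show ?thesis by (simp add: eval_mkL)
qed

lemma sum_split3: "(\<Sum>j<3*K. f j) = (\<Sum>k<K. f k + f (K+k) + f (2*K+k))" for K :: nat and f :: "nat \<Rightarrow> real"
proof -
  have "3*K = K + K + K" by simp
  then have "(\<Sum>j<3*K. f j) = (\<Sum>j<K. f j) + (\<Sum>t<K. f (K+t)) + (\<Sum>t<K. f (K+K+t))"
    by (simp only: sum_split_add)
  then show ?thesis by (simp add: sum.distrib mult_2 add.assoc)
qed

lemma layer4:
  fixes K :: nat and r1 r2 r3 :: "nat \<Rightarrow> real" and g2 M2 :: real
  shows "eval_layer (mkL (3*K) 1 (W4 K g2 M2) (\<lambda>i. real K * (1 - exp (2*M2)/2)/g2^2) False)
     (map (\<lambda>i. if i < K then r1 i else if i < 2*K then r2 (i-K) else r3 (i-2*K)) [0..<3*K]) =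
    [\<Sum>k<K. (ex M2 (r1 k) - ex M2 (r2 k) - ex M2 (r3 k) + 1)/g2^2]"
proof -
  let ?O = "map (\<lambda>i. if i < K then r1 i else if i < 2*K then r2 (i-K) else r3 (i-2*K)) [0..<3*K]"
  have "(\<Sum>j<3*K. W4 K g2 M2 0 j * ?O ! j) = (\<Sum>k<K. exp (2*M2)/(2*g2^2) * (r1 k - r2 k - r3 k))"
    unfolding sum_split3 by (intro sum.cong refl) (simp add: W4_def algebra_simps diff_divide_distrib add_divide_distrib)
  moreover have "real K * (1 - exp (2*M2)/2)/g2^2 = (\<Sum>k<K. (1 - exp (2*M2)/2)/g2^2)" by simp
  ultimately have "(\<Sum>j<3*K. W4 K g2 M2 0 j * ?O ! j) + real K * (1 - exp (2*M2)/2)/g2^2 =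
    (\<Sum>k<K. exp (2*M2)/(2*g2^2) * (r1 k - r2 k - r3 k)) + (\<Sum>k<K. (1 - exp (2*M2)/2)/g2^2)" by simp
  also have "\<dots> = (\<Sum>k<K. (ex M2 (r1 k) - ex M2 (r2 k) - ex M2 (r3 k) + 1)/g2^2)"
    unfolding sum.distrib[symmetric] by (intro sum.cong refl) (cases "g2 = 0"; simp add: ex_def field_simps)
  finally show ?thesis by (simp add: eval_mkL)
qed

lemma net_eval:
  assumes a: "length a = K" and g1: "g1 > 0"
  shows "hd (eval_mlp (net K n g1 h M1 g2 M2 c) (a @ [x])) =
    (\<Sum>k<K. G g2 M2 (alpha g1 M1 (a!k)) (beta n h M1 c x k))"
proof -
  let ?p = "\<lambda>i. alpha g1 M1 (a!i)"
  let ?q = "beta n h M1 c x"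
  have "eval_mlp (net K n g1 h M1 g2 M2 c) (a @ [x]) =
    eval_layer (mkL (3*K) 1 (W4 K g2 M2) (\<lambda>i. real K * (1 - exp (2*M2)/2)/g2^2) False)
     (eval_layer (mkL (2*K) (3*K) (W3 K g2) (\<lambda>i. - M2) True)
      (eval_layer (mkL (K+n) (2*K) (W2 K g1 M1 c) (b2 K n g1 M1 c) False)
       (eval_layer (mkL (K+1) (K+n) (W1 K g1 h) (\<lambda>i. - M1) True) (a @ [x]))))"
    by (simp add: eval_mlp_def net_def)
  also note layer1[OF a]
  also note layer2[OF g1]
  also note layer3[where p = ?p and q = ?q]
  also note layer4
  finally show ?thesis by (simp add: G_def F_def)
qed



lemma alpha_err:
  fixes g1 M1 A \<delta> d1 Z a :: real
  assumes g1: "g1 > 0"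
    and lin: "\<And>u. \<bar>u\<bar> \<le> A \<Longrightarrow> \<bar>(exp (g1*u) - 1)/g1 - u\<bar> \<le> \<delta>/2"
    and M1: "\<forall>z. z \<le> Z \<longrightarrow> \<bar>ex M1 (tanh (z - M1)) - exp (2*z)\<bar> \<le> d1"
    and d1: "d1 \<le> g1*\<delta>/2" and Z: "g1*A/2 \<le> Z" and a: "\<bar>a\<bar> \<le> A"
  shows "\<bar>alpha g1 M1 a - a\<bar> \<le> \<delta>"
proof -
  have "g1/2*a \<le> g1*A/2" using a g1 by (simp add: abs_le_iff mult_left_mono)
  then have "g1/2*a \<le> Z" using Z by linarith
  then have "\<bar>ex M1 (tanh (g1/2*a - M1)) - exp (2*(g1/2*a))\<bar> \<le> d1" by (rule M1[rule_format])
  then have e: "\<bar>ex M1 (tanh (g1/2*a - M1)) - exp (g1*a)\<bar> \<le> g1*\<delta>/2" using d1 by simp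
  have "alpha g1 M1 a - a = (ex M1 (tanh (g1/2*a - M1)) - exp (g1*a))/g1 + ((exp (g1*a) - 1)/g1 - a)"
    using g1 by (simp add: alpha_def field_simps)
  moreover have "\<bar>(ex M1 (tanh (g1/2*a - M1)) - exp (g1*a))/g1\<bar> \<le> \<delta>/2"
    using e g1 by (simp add: abs_divide divide_le_eq mult.commute)
  ultimately show ?thesis using lin[OF a] by linarith
qed

lemma beta_err:
  fixes h x dh tau \<delta> T d1 Z M1 :: real and n k :: nat and cc :: "nat \<Rightarrow> nat \<Rightarrow> real"
  assumes h: "h > 0" and x: "0 \<le> x" "x \<le> 1"
    and hl: "\<bar>(exp (h*x) - 1)/h - x\<bar> \<le> dh" and dh: "dh \<le> 1" and tau: "tau \<ge> 0" "tau * dh \<le> \<delta>/3"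
    and T: "tau * 2 \<le> T" and taylor: "T^n / fact n \<le> \<delta>/3"
    and M1: "\<forall>z. z \<le> Z \<longrightarrow> \<bar>ex M1 (tanh (z - M1)) - exp (2*z)\<bar> \<le> d1"
    and Z: "real n * h / 2 \<le> Z" and S: "(\<Sum>i\<le>n. \<bar>cc k i\<bar>) * d1 \<le> \<delta>/3"
    and cc: "\<And>i. cc k i = cf tau h n i"
  shows "\<bar>beta n h M1 cc x k - sin (tau * x)\<bar> \<le> \<delta>"
proof -
  define y where "y = exp (h*x)"
  define w where "w = (y - 1)/h"
  have wx: "\<bar>w - x\<bar> \<le> dh" using hl by (simp add: w_def y_def)
  have d1: "d1 \<ge> 0" using M1 by (metis abs_ge_zero order_trans order_refl)
  have en: "\<bar>ex M1 (tanh (real (Suc t) * h/2 * x - M1)) - y^(Suc t)\<bar> \<le> d1" if t: "t < n" for t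
  proof -
    have "real (Suc t) * h/2 * x \<le> real n * h/2 * 1"
      using t h x by (intro mult_mono) (auto simp: divide_right_mono)
    then have "real (Suc t) * h/2 * x \<le> Z" using Z by simp
    then have "\<bar>ex M1 (tanh (real (Suc t) * h/2 * x - M1)) - exp (2*(real (Suc t) * h/2 * x))\<bar> \<le> d1"
      by (rule M1[rule_format])
    moreover have "exp (2*(real (Suc t) * h/2 * x)) = y^(Suc t)"
    proof -
      have "2*(real (Suc t) * h/2 * x) = real (Suc t) * (h*x)" by simp
      then show ?thesis unfolding y_def by (simp only: exp_of_nat_mult)
    qed
    ultimately show ?thesis by simp
  qed
  have "beta n h M1 cc x k - (\<Sum>i\<le>n. cc k i * y^i) =
      (\<Sum>t<n. cc k (Suc t) * (ex M1 (tanh (real (Suc t) * h/2 * x - M1)) - y^(Suc t)))"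
    by (simp add: beta_def sum.atMost_shift right_diff_distrib sum_subtractf)
  also have "\<bar>\<dots>\<bar> \<le> (\<Sum>t<n. \<bar>cc k (Suc t)\<bar> * d1)"
  proof (rule order_trans[OF sum_abs], rule sum_mono)
    fix t assume "t \<in> {..<n}"
    then have "\<bar>ex M1 (tanh (real (Suc t) * h/2 * x - M1)) - y^(Suc t)\<bar> \<le> d1" by (intro en) auto
    then show "\<bar>cc k (Suc t) * (ex M1 (tanh (real (Suc t) * h/2 * x - M1)) - y^(Suc t))\<bar> \<le> \<bar>cc k (Suc t)\<bar> * d1"
      unfolding abs_mult by (intro mult_left_mono) auto
  qed
  also have "\<dots> \<le> (\<Sum>i\<le>n. \<bar>cc k i\<bar>) * d1"
  proof -
    have "(\<Sum>t<n. \<bar>cc k (Suc t)\<bar> * d1) = (\<Sum>t<n. \<bar>cc k (Suc t)\<bar>) * d1" by (simp add: sum_distrib_right)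
    also have "\<dots> \<le> (\<bar>cc k 0\<bar> + (\<Sum>t<n. \<bar>cc k (Suc t)\<bar>)) * d1" using d1 by (intro mult_right_mono) auto
    finally show ?thesis by (simp add: sum.atMost_shift)
  qed
  finally have e1: "\<bar>beta n h M1 cc x k - (\<Sum>i\<le>n. cc k i * y^i)\<bar> \<le> \<delta>/3" using S by linarith
  have "(\<Sum>i\<le>n. cc k i * y^i) = (\<Sum>m<n. sin_coeff m * (tau*w)^m)"
    unfolding cc w_def by (rule poly_exp_id)
  moreover have "\<bar>sin (tau*w) - (\<Sum>m<n. sin_coeff m * (tau*w)^m)\<bar> \<le> inverse (fact n) * \<bar>tau*w\<bar>^n"
    by (rule Maclaurin_sin_bound)
  moreover have "inverse (fact n) * \<bar>tau*w\<bar>^n \<le> \<delta>/3"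
  proof -
    have "\<bar>w\<bar> \<le> 2" using wx dh x by linarith
    then have "tau * \<bar>w\<bar> \<le> tau * 2" using tau by (intro mult_left_mono) auto
    then have "\<bar>tau*w\<bar> \<le> T" using tau T by (simp add: abs_mult)
    then have "\<bar>tau*w\<bar>^n \<le> T^n" by (intro power_mono) auto
    then have "inverse (fact n) * \<bar>tau*w\<bar>^n \<le> T^n / fact n" by (simp add: divide_right_mono field_simps)
    then show ?thesis using taylor by linarith
  qed
  ultimately have e2: "\<bar>(\<Sum>i\<le>n. cc k i * y^i) - sin (tau*w)\<bar> \<le> \<delta>/3" by linarith
  have "\<bar>sin (tau*w) - sin (tau*x)\<bar> \<le> \<bar>tau*w - tau*x\<bar>" by (rule sin_lip)
  also have "\<dots> = tau * \<bar>w - x\<bar>" using tau by (simp add: abs_mult right_diff_distrib[symmetric])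
  also have "\<dots> \<le> tau * dh" using wx tau by (intro mult_left_mono) auto
  finally have e3: "\<bar>sin (tau*w) - sin (tau*x)\<bar> \<le> \<delta>/3" using tau by linarith
  show ?thesis using e1 e2 e3 by linarith
qed

lemma term_err:
  fixes al be a s \<delta> A Bb e3 g2 M2 :: real
  assumes "\<bar>al - a\<bar> \<le> \<delta>" "\<bar>be - s\<bar> \<le> \<delta>" "\<bar>a\<bar> \<le> A" "\<bar>s\<bar> \<le> 1" "\<delta> \<le> 1" "A + 1 \<le> Bb" "2 \<le> Bb"
    and P: "\<forall>a b. \<bar>a\<bar> \<le> Bb \<longrightarrow> \<bar>b\<bar> \<le> Bb \<longrightarrow> \<bar>G g2 M2 a b - a*b\<bar> \<le> e3"
  shows "\<bar>G g2 M2 al be - a * s\<bar> \<le> e3 + 2*\<delta>*Bb"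
proof -
  have d: "\<delta> \<ge> 0" using assms(1) by linarith
  have al: "\<bar>al\<bar> \<le> Bb" and be: "\<bar>be\<bar> \<le> Bb" using assms by linarith+
  have g: "\<bar>G g2 M2 al be - al*be\<bar> \<le> e3" using P al be by blast
  have "al*be - a*s = (al - a)*be + a*(be - s)" by (simp add: algebra_simps)
  then have "\<bar>al*be - a*s\<bar> \<le> \<bar>al - a\<bar>*\<bar>be\<bar> + \<bar>a\<bar>*\<bar>be - s\<bar>"
    by (simp add: abs_mult[symmetric] abs_triangle_ineq)
  also have "\<dots> \<le> \<delta>*Bb + Bb*\<delta>"
    using assms al be d by (intro add_mono mult_mono) auto
  also have "\<delta>*Bb + Bb*\<delta> = 2*\<delta>*Bb" by simp
  finally show ?thesis using g by linarith
qed



lemma weights_bound: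
  fixes K n :: nat and L c0 :: real
  assumes K: "1 \<le> K" and n: "real n \<le> c0 * K + 2*L" and L: "L > 0" and c0: "c0 \<ge> 0"
  shows "real ((K+n)*(K+1) + (K+n) + 2*K*(K+n) + 2*K + 3*K*(2*K) + 3*K + 3*K + 1)
     \<le> (30 + 5*c0) * (real K ^ 2 + real K * L ^ 2)"
proof -
  have f: "K \<le> K*K" "n \<le> K*n" "1 \<le> K*K" using K by simp_all
  have "(K+n)*(K+1) + (K+n) + 2*K*(K+n) + 2*K + 3*K*(2*K) + 3*K + 3*K + 1 = 9*(K*K) + 3*(K*n) + 10*K + 2*n + 1"
    by (simp add: algebra_simps)
  then have "(K+n)*(K+1) + (K+n) + 2*K*(K+n) + 2*K + 3*K*(2*K) + 3*K + 3*K + 1 \<le> 20*(K*K) + 5*(K*n)"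
    using f by linarith
  then have "real ((K+n)*(K+1) + (K+n) + 2*K*(K+n) + 2*K + 3*K*(2*K) + 3*K + 3*K + 1) \<le> real (20*(K*K) + 5*(K*n))"
    by (simp only: of_nat_le_iff)
  also have "real (20*(K*K) + 5*(K*n)) = 20*(real K*real K) + 5*(real K*real n)" by simp
  also have "real K * real n \<le> real K * (c0 * K + 2*L)" using n by (intro mult_left_mono) auto
  also have "L \<le> real K + L^2"
  proof -
    have "0 \<le> (L-1)^2" by simp
    then have "0 \<le> L^2 - 2*L + 1" by (simp add: power2_diff)
    then have "L \<le> 1 + L^2" using L by linarith
    then show ?thesis using K by linarith
  qed
  then have "real K * L \<le> real K * (real K + L^2)" by (intro mult_left_mono) auto
  then have "20*(real K*real K) + 5*(real K * (c0 * K + 2*L)) \<le> (20 + 5*c0) * (real K)^2 + 10 * ((real K)^2 + real K * L^2)"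
    by (simp add: algebra_simps power2_eq_square)
  also have "\<dots> \<le> (30 + 5*c0) * (real K ^ 2 + real K * L ^ 2)"
  proof -
    have eq: "(30 + 5*c0) * (real K ^ 2 + real K * L ^ 2) = (20 + 5*c0) * (real K)^2 + 10 * ((real K)^2 + real K * L^2) + (20 + 5*c0) * (real K * L^2)"
      by (simp add: algebra_simps)
    have "0 \<le> (20 + 5*c0) * (real K * L^2)" using c0 by simp
    then show ?thesis unfolding eq by linarith
  qed
  finally show ?thesis by simp
qed



theorem theorem3:
  fixes A :: real
  assumes "A > 0"
  shows "\<exists>C::real. \<forall>(K::nat) (\<epsilon>::real). 1 \<le> K \<longrightarrow> 0 < \<epsilon> \<longrightarrow> \<epsilon> < 1 \<longrightarrow>
     (\<exists>N::mlp. wf_mlp (K + 1) N 1 \<and>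
        real (num_weights N) \<le> C * (real K ^ 2 + real K * (ln (real K / \<epsilon>)) ^ 2) \<and>
        (\<forall>(a::real list) (x::real). length a = K \<longrightarrow> (\<forall>i<K. \<bar>a ! i\<bar> \<le> A) \<longrightarrow>
            0 \<le> x \<longrightarrow> x \<le> 1 \<longrightarrow>
            \<bar>hd (eval_mlp N (a @ [x])) - R_fun a x\<bar> \<le> \<epsilon>))"
proof -
  define Bb where "Bb = A + 3"
  define c0 where "c0 = 16*pi + 2 + 2*ln(27*Bb)"
  have Bb: "Bb \<ge> 3" "A + 1 \<le> Bb" "2 \<le> Bb" "Bb > 0" using assms by (auto simp: Bb_def)
  have "ln (27*Bb) \<ge> 0" using Bb by simp
  then have c0: "c0 \<ge> 0" using pi_gt_zero unfolding c0_def by linarith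
  show ?thesis
  proof (intro exI[of _ "30 + 5*c0"] allI impI)
    fix K :: nat and \<epsilon> :: real
    assume K: "1 \<le> K" and e0: "0 < \<epsilon>" and e1: "\<epsilon> < 1"
    have Kr: "real K \<ge> 1" using K by simp
    define L where "L = ln (real K / \<epsilon>)"
    have "real K / \<epsilon> > 1" using Kr e0 e1 by (simp add: field_simps)
    then have L: "L > 0" by (simp add: L_def)
    define \<delta> where "\<delta> = min 1 (\<epsilon>/(3*K*Bb))"
    have d0: "\<delta> > 0" "\<delta> \<le> 1" using e0 Bb K by (auto simp: \<delta>_def)
    have "\<delta> * Bb \<le> \<epsilon>/(3*K*Bb) * Bb" using Bb by (intro mult_right_mono) (auto simp: \<delta>_def)
    also have "\<dots> = \<epsilon>/(3*K)" using Bb by simp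
    finally have dB: "\<delta> * Bb \<le> \<epsilon>/(3*K)" .
    have dlow: "\<delta> \<ge> \<epsilon>/(9*K*Bb)"
    proof -
      have "real K * Bb \<ge> 1 * 3" using Kr Bb by (intro mult_mono) auto
      then have "9*K*Bb \<ge> \<epsilon>" using e1 by linarith
      moreover have "9*K*Bb > 0" using Kr Bb by simp
      ultimately have "\<epsilon>/(9*K*Bb) \<le> 1" by (simp add: divide_le_eq_1)
      moreover have "\<epsilon>/(9*K*Bb) \<le> \<epsilon>/(3*K*Bb)" using e0 Bb Kr by (intro divide_left_mono) auto
      ultimately show ?thesis by (simp add: \<delta>_def)
    qed
    have "\<epsilon>/(3*K) > 0" using e0 K by simp
    then obtain g2 M2 where P: "\<forall>a b. \<bar>a\<bar> \<le> Bb \<longrightarrow> \<bar>b\<bar> \<le> Bb \<longrightarrow> \<bar>G g2 M2 a b - a*b\<bar> \<le> \<epsilon>/(3*K)"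
      using prod_gadget[of Bb "\<epsilon>/(3*K)"] Bb by auto
    obtain g1 where g1: "g1 > 0" "g1 \<le> 1" and lin: "\<And>u. \<bar>u\<bar> \<le> A \<Longrightarrow> \<bar>(exp (g1*u) - 1)/g1 - u\<bar> \<le> \<delta>/2"
      using lin_gadget[of A "\<delta>/2"] assms d0 by auto
    define T where "T = 4*pi*K"
    have T0: "T \<ge> 0" by (simp add: T_def)
    define n where "n = nat \<lceil>2*T\<rceil> + nat \<lceil>2*T + 2 * ln (1/(\<delta>/3))\<rceil>"
    have taylor: "T^n / fact n \<le> \<delta>/3" unfolding n_def by (rule degree_choice) (use T0 d0 in auto)
    define dh where "dh = min 1 (\<delta>/(6*pi*K))"
    have dh0: "dh > 0" "dh \<le> 1" using d0 Kr by (auto simp: dh_def)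
    obtain h where h: "h > 0" "h \<le> 1" and hl: "\<And>u. \<bar>u\<bar> \<le> 1 \<Longrightarrow> \<bar>(exp (h*u) - 1)/h - u\<bar> \<le> dh"
      using lin_gadget[of 1 dh] dh0 by auto
    define cc where "cc = (\<lambda>k i. cf (2*pi*real (Suc k)) h n i)"
    define S where "S = 1 + (\<Sum>k<K. \<Sum>i\<le>n. \<bar>cc k i\<bar>)"
    have S1: "S \<ge> 1" unfolding S_def by (simp add: sum_nonneg)
    define d1 where "d1 = min (g1*\<delta>/2) (\<delta>/(3*S))"
    have d1: "d1 > 0" using g1 d0 S1 by (simp add: d1_def)
    define Z where "Z = g1*A/2 + real n*h/2"
    obtain M1 where M1: "\<forall>z. z \<le> Z \<longrightarrow> \<bar>ex M1 (tanh (z - M1)) - exp (2*z)\<bar> \<le> d1"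
      using ex_gadget[OF d1] by blast
    define N where "N = net K n g1 h M1 g2 M2 cc"
    show "\<exists>N. wf_mlp (K + 1) N 1 \<and>
        real (num_weights N) \<le> (30 + 5*c0) * (real K ^ 2 + real K * (ln (real K / \<epsilon>)) ^ 2) \<and>
        (\<forall>(a::real list) (x::real). length a = K \<longrightarrow> (\<forall>i<K. \<bar>a ! i\<bar> \<le> A) \<longrightarrow>
            0 \<le> x \<longrightarrow> x \<le> 1 \<longrightarrow>
            \<bar>hd (eval_mlp N (a @ [x])) - R_fun a x\<bar> \<le> \<epsilon>)"
    proof (intro exI[of _ N] conjI allI impI)
      show "wf_mlp (K + 1) N 1" unfolding N_def by (rule net_wf)
    next
      have cl: "real (nat \<lceil>y\<rceil>) \<le> y + 1" if "y \<ge> 0" for y :: real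
        using that ceiling_correct[of y] by linarith
      have q: "1/(\<delta>/3) = 3/\<delta>" by simp
      have "3/\<delta> \<ge> 1" using d0 by simp
      then have lnpos: "ln (1/(\<delta>/3)) \<ge> 0" unfolding q by simp
      have "3/\<delta> \<le> 3/(\<epsilon>/(9*K*Bb))" using dlow d0 e0 Kr Bb by (intro divide_left_mono) auto
      also have "\<dots> = (27*Bb) * (real K/\<epsilon>)" using e0 Kr Bb by (simp add: field_simps)
      finally have le: "3/\<delta> \<le> (27*Bb) * (real K/\<epsilon>)" .
      have "ln (3/\<delta>) \<le> ln ((27*Bb) * (real K/\<epsilon>))" using d0 by (intro ln_mono le) auto
      also have "\<dots> = ln (27*Bb) + L" unfolding L_def using Bb e0 Kr by (intro ln_mult_pos) auto
      finally have lnb: "ln (1/(\<delta>/3)) \<le> ln (27*Bb) + L" unfolding q .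
      have "real n \<le> (2*T + 1) + (2*T + 2 * ln (1/(\<delta>/3)) + 1)"
        unfolding n_def of_nat_add using T0 lnpos by (intro add_mono cl) auto
      also have "\<dots> \<le> 16*pi*K + (2 + 2*ln(27*Bb)) + 2*L" using lnb by (simp add: T_def)
      also have "\<dots> \<le> 16*pi*K + (2 + 2*ln(27*Bb)) * K + 2*L"
      proof -
        have "ln (27*Bb) \<ge> 0" using Bb by simp
        then have "(2 + 2*ln(27*Bb)) * 1 \<le> (2 + 2*ln(27*Bb)) * K" using Kr by (intro mult_left_mono) auto
        then show ?thesis by simp
      qed
      also have "\<dots> = c0 * K + 2*L" by (simp add: c0_def algebra_simps)
      finally have nb: "real n \<le> c0 * K + 2*L" .
      show "real (num_weights N) \<le> (30 + 5*c0) * (real K ^ 2 + real K * (ln (real K / \<epsilon>)) ^ 2)"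
        unfolding N_def net_weights L_def[symmetric] by (rule weights_bound[OF K nb L c0])
    next
      fix a :: "real list" and x :: real
      assume a: "length a = K" and aA: "\<forall>i<K. \<bar>a ! i\<bar> \<le> A" and x: "0 \<le> x" "x \<le> 1"
      have ev: "hd (eval_mlp N (a @ [x])) = (\<Sum>k<K. G g2 M2 (alpha g1 M1 (a!k)) (beta n h M1 cc x k))"
        unfolding N_def by (rule net_eval[OF a g1(1)])
      have R: "R_fun a x = (\<Sum>k<K. a!k * sin (2*pi*real (Suc k) * x))"
        unfolding R_fun_def a by (simp add: sum.atLeast1_atMost_eq)
      have tk: "\<bar>G g2 M2 (alpha g1 M1 (a!k)) (beta n h M1 cc x k) - a!k * sin (2*pi*real (Suc k) * x)\<bar> \<le> \<epsilon>/K"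
        if k: "k < K" for k
      proof -
        have ak: "\<bar>a!k\<bar> \<le> A" using aA k by blast
        have Zn: "g1*A/2 \<le> Z" "real n * h/2 \<le> Z" using g1 h assms by (auto simp: Z_def)
        have d1le: "d1 \<le> g1*\<delta>/2" unfolding d1_def by (rule min.cobounded1)
        have ea: "\<bar>alpha g1 M1 (a!k) - a!k\<bar> \<le> \<delta>"
          by (rule alpha_err[OF g1(1) _ M1 d1le Zn(1) ak]) (rule lin)
        define tau where "tau = 2*pi*real (Suc k)"
        have tau: "tau \<ge> 0" by (simp add: tau_def)
        have tauK: "tau \<le> 2*pi*K" using k by (simp add: tau_def)
        have "tau * dh \<le> 2*pi*K * (\<delta>/(6*pi*K))" using tauK dh0 tau
          by (intro mult_mono) (auto simp: dh_def)
        also have "\<dots> = \<delta>/3" using Kr by simp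
        finally have tdh: "tau * dh \<le> \<delta>/3" .
        have tT: "tau * 2 \<le> T" using tauK by (simp add: T_def)
        have "(\<Sum>i\<le>n. \<bar>cc k i\<bar>) \<le> (\<Sum>k<K. \<Sum>i\<le>n. \<bar>cc k i\<bar>)"
          using k by (intro member_le_sum) (auto simp: sum_nonneg)
        then have sk: "(\<Sum>i\<le>n. \<bar>cc k i\<bar>) \<le> S" by (simp add: S_def)
        have "(\<Sum>i\<le>n. \<bar>cc k i\<bar>) * d1 \<le> S * (\<delta>/(3*S))"
          using sk d1 S1 by (intro mult_mono) (auto simp: sum_nonneg, unfold d1_def, rule min.cobounded2)
        also have "\<dots> = \<delta>/3" using S1 by simp
        finally have sd: "(\<Sum>i\<le>n. \<bar>cc k i\<bar>) * d1 \<le> \<delta>/3" .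
        have hx: "\<bar>(exp (h*x) - 1)/h - x\<bar> \<le> dh" using hl x by auto
        have eb: "\<bar>beta n h M1 cc x k - sin (tau * x)\<bar> \<le> \<delta>"
          by (rule beta_err[where cc=cc and k=k, OF h(1) x hx dh0(2) tau tdh tT taylor M1 Zn(2) sd]) (simp add: cc_def tau_def)
        have "\<bar>G g2 M2 (alpha g1 M1 (a!k)) (beta n h M1 cc x k) - a!k * sin (tau * x)\<bar> \<le> \<epsilon>/(3*K) + 2*\<delta>*Bb"
          by (rule term_err[OF ea eb ak abs_sin_le_one d0(2) Bb(2) Bb(3) P])
        also have "\<dots> \<le> \<epsilon>/K" using dB Kr by (simp add: field_simps)
        finally show ?thesis by (simp add: tau_def mult.assoc)
      qed
      have "hd (eval_mlp N (a @ [x])) - R_fun a x =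
          (\<Sum>k<K. G g2 M2 (alpha g1 M1 (a!k)) (beta n h M1 cc x k) - a!k * sin (2*pi*real (Suc k) * x))"
        unfolding ev R by (simp add: sum_subtractf)
      also have "\<bar>\<dots>\<bar> \<le> (\<Sum>k<K. \<epsilon>/K)"
        by (rule order_trans[OF sum_abs]) (intro sum_mono tk; simp)
      also have "\<dots> = \<epsilon>" using Kr by simp
      finally show "\<bar>hd (eval_mlp N (a @ [x])) - R_fun a x\<bar> \<le> \<epsilon>" .
    qed
  qed
qed


end
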